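(* Let $E$ be a locally compact separable metric space, $Q(x,dy)$ a probability kernel on $(E,\mathcal{B}(E))$ with $Q(x,\{x\})=0$ for all $x\in E$, and $m_0$ a $\sigma$-finite measure fully supported on $E$ with $Q(x,dy)m_0(dx)=Q(y,dx)m_0(dy)$. Let $\lambda$ be a bounded Borel function on $E$ with $0<\lambda(x)<\infty$, and suppose $m(dx):=\lambda(x)^{-1}m_0(dx)$ is a Radon measure. Let $(\mathcal{E},\mathcal{F})$ be the Dirichlet form on $L^2(E,m)$ given by $\mathcal{F}=L^2(E,m)$ and $$\mathcal{E}(u,v)=\frac12\int_{E\times E}(u(x)-u(y))(v(x)-v(y))Q(x,dy)\lambda(x)m(dx)+\int_E u(x)v(x)(1-Q(x,E))\lambda(x)m(dx),$$ which is a regular Dirichlet form (associated with the pure jump step process with road map $Q$ and speed function $\lambda$). If $(\mathcal{E}',\mathcal{F}')$ is a regular Dirichlet subspace of $(\mathcal{E},\mathcal{F})$, then $(\mathcal{E}',\mathcal{F}')=(\mathcal{E},\mathcal{F})$.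
   Context: A regular Dirichlet subspace of a regular Dirichlet form $(\mathcal{E},\mathcal{F})$ on $L^2(E,m)$ is a regular Dirichlet form $(\mathcal{E}',\mathcal{F}')$ on $L^2(E,m)$ with $\mathcal{F}'\subset\mathcal{F}$ and $\mathcal{E}'(u,v)=\mathcal{E}(u,v)$ for all $u,v\in\mathcal{F}'$. *)

theory Defs
  imports "HOL-Probability.Probability"
begin

definition L2 :: "'a measure \<Rightarrow> ('a \<Rightarrow> real) set" where
  "L2 m = {u. u \<in> borel_measurable m \<and> integrable m (\<lambda>x. (u x)\<^sup>2)}"

definition Cc :: "('a::topological_space \<Rightarrow> real) set" where
  "Cc = {u. continuous_on UNIV u \<and> compact (closure {x. u x \<noteq> 0})}"

definition E1 :: "'a measure \<Rightarrow> (('a \<Rightarrow> real) \<Rightarrow> ('a \<Rightarrow> real) \<Rightarrow> real) \<Rightarrow> ('a \<Rightarrow> real) \<Rightarrow> real" where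
  "E1 m \<E> w = \<E> w w + (\<integral>x. (w x)\<^sup>2 \<partial>m)"

text \<open>Dirichlet form (\<E>,F) on L^2(E,m), F given as a set of representatives,
  saturated under m-a.e. equality (Fukushima--Oshima--Takeda).\<close>
definition dirichlet_form ::
  "'a measure \<Rightarrow> (('a \<Rightarrow> real) \<Rightarrow> ('a \<Rightarrow> real) \<Rightarrow> real) \<Rightarrow> ('a \<Rightarrow> real) set \<Rightarrow> bool" where
  "dirichlet_form m \<E> F \<longleftrightarrow>
     F \<subseteq> L2 m
   \<and> (\<forall>u\<in>F. \<forall>v\<in>L2 m. (AE x in m. u x = v x) \<longrightarrow> v \<in> F)
   \<and> (\<forall>u\<in>F. \<forall>v\<in>F. \<forall>w\<in>F. (AE x in m. u x = v x) \<longrightarrow> \<E> u w = \<E> v w)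
   \<comment> \<open>dense linear subspace of L^2\<close>
   \<and> (\<forall>u\<in>F. \<forall>v\<in>F. \<forall>a b::real. (\<lambda>x. a * u x + b * v x) \<in> F)
   \<and> (\<forall>f\<in>L2 m. \<forall>\<epsilon>>0. \<exists>u\<in>F. (\<integral>x. (f x - u x)\<^sup>2 \<partial>m) < \<epsilon>)
   \<comment> \<open>symmetric, bilinear, nonnegative definite\<close>
   \<and> (\<forall>u\<in>F. \<forall>v\<in>F. \<E> u v = \<E> v u)
   \<and> (\<forall>u\<in>F. \<forall>v\<in>F. \<forall>w\<in>F. \<forall>a b::real.
        \<E> (\<lambda>x. a * u x + b * v x) w = a * \<E> u w + b * \<E> v w)
   \<and> (\<forall>u\<in>F. \<E> u u \<ge> 0)
   \<comment> \<open>closed: (F, E_1) is complete\<close>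
   \<and> (\<forall>u::nat \<Rightarrow> 'a \<Rightarrow> real. (\<forall>n. u n \<in> F) \<longrightarrow>
        (\<forall>\<epsilon>>0. \<exists>N. \<forall>n\<ge>N. \<forall>k\<ge>N. E1 m \<E> (\<lambda>x. u n x - u k x) < \<epsilon>) \<longrightarrow>
        (\<exists>v\<in>F. (\<lambda>n. E1 m \<E> (\<lambda>x. u n x - v x)) \<longlonglongrightarrow> 0))
   \<comment> \<open>Markovian: the unit contraction operates on \<E>\<close>
   \<and> (\<forall>u\<in>F. (\<lambda>x. min 1 (max 0 (u x))) \<in> F \<and>
        \<E> (\<lambda>x. min 1 (max 0 (u x))) (\<lambda>x. min 1 (max 0 (u x))) \<le> \<E> u u)"

definition regular_dirichlet_form ::
  "'a::topological_space measure \<Rightarrow> (('a \<Rightarrow> real) \<Rightarrow> ('a \<Rightarrow> real) \<Rightarrow> real) \<Rightarrow> ('a \<Rightarrow> real) set \<Rightarrow> bool" where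
  "regular_dirichlet_form m \<E> F \<longleftrightarrow>
     dirichlet_form m \<E> F
   \<and> (\<forall>u\<in>F. \<forall>\<epsilon>>0. \<exists>g\<in>F \<inter> Cc. E1 m \<E> (\<lambda>x. u x - g x) < \<epsilon>)
   \<and> (\<forall>f\<in>Cc. \<forall>\<epsilon>>0. \<exists>g\<in>F \<inter> Cc. \<forall>x. \<bar>f x - g x\<bar> < \<epsilon>)"

definition regular_dirichlet_subspace ::
  "'a::topological_space measure \<Rightarrow> (('a \<Rightarrow> real) \<Rightarrow> ('a \<Rightarrow> real) \<Rightarrow> real) \<Rightarrow> ('a \<Rightarrow> real) set
   \<Rightarrow> (('a \<Rightarrow> real) \<Rightarrow> ('a \<Rightarrow> real) \<Rightarrow> real) \<Rightarrow> ('a \<Rightarrow> real) set \<Rightarrow> bool" where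
  "regular_dirichlet_subspace m \<E> F \<E>' F' \<longleftrightarrow>
     regular_dirichlet_form m \<E>' F' \<and> F' \<subseteq> F \<and> (\<forall>u\<in>F'. \<forall>v\<in>F'. \<E>' u v = \<E> u v)"

definition radon_measure :: "'a::topological_space measure \<Rightarrow> bool" where
  "radon_measure m \<longleftrightarrow> sets m = sets borel \<and> (\<forall>K. compact K \<longrightarrow> emeasure m K < \<infinity>)"

definition jump_form ::
  "'a measure \<Rightarrow> ('a \<Rightarrow> 'a measure) \<Rightarrow> ('a \<Rightarrow> real) \<Rightarrow> ('a \<Rightarrow> real) \<Rightarrow> ('a \<Rightarrow> real) \<Rightarrow> real" where
  "jump_form m Q lam u v =
     (1/2) * (\<integral>x. (\<integral>y. (u x - u y) * (v x - v y) \<partial>Q x) * lam x \<partial>m)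
     + (\<integral>x. u x * v x * (1 - measure (Q x) (space (Q x))) * lam x \<partial>m)"

end

theory Submission
  imports Defs
begin

lemma kernel_inv:
  fixes Q :: "'a::topological_space \<Rightarrow> 'a measure" and m0 :: "'a measure"
  assumes Q_prob: "\<And>x. prob_space (Q x)"
    and Q_sets: "\<And>x. sets (Q x) = sets borel"
    and Q_meas: "\<And>A. A \<in> sets borel \<Longrightarrow> (\<lambda>x. emeasure (Q x) A) \<in> borel_measurable borel"
    and m0_sets: "sets m0 = sets borel"
    and Q_sym: "\<And>C. C \<in> sets (borel \<Otimes>\<^sub>M borel) \<Longrightarrow>
        (\<integral>\<^sup>+x. (\<integral>\<^sup>+y. indicator C (x, y) \<partial>Q x) \<partial>m0)
      = (\<integral>\<^sup>+y. (\<integral>\<^sup>+x. indicator C (x, y) \<partial>Q y) \<partial>m0)"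
    and h: "h \<in> borel_measurable borel"
  shows "(\<integral>\<^sup>+x. \<integral>\<^sup>+y. h y \<partial>Q x \<partial>m0) = (\<integral>\<^sup>+y. h y \<partial>m0)"
proof -
  have Qm: "Q \<in> measurable borel (subprob_algebra borel)"
    by (rule measurable_subprob_algebra) (auto simp: prob_space_imp_subprob_space Q_prob Q_sets Q_meas)
  have Qm': "Q \<in> measurable m0 (subprob_algebra borel)"
    using Qm measurable_cong_sets[OF m0_sets refl] by blast
  have sp: "space m0 = UNIV" using sets_eq_imp_space_eq[OF m0_sets] by simp
  have eq: "m0 \<bind> Q = m0"
  proof (rule measure_eqI)
    show "sets (m0 \<bind> Q) = sets m0"
      using sets_bind_measurable[OF Qm'] sp m0_sets by simp
    fix A assume "A \<in> sets (m0 \<bind> Q)"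
    then have A: "A \<in> sets borel" using sets_bind_measurable[OF Qm'] sp by simp
    have "emeasure (m0 \<bind> Q) A = (\<integral>\<^sup>+x. emeasure (Q x) A \<partial>m0)"
      using emeasure_bind[OF _ Qm' A] sp by simp
    also have "\<dots> = (\<integral>\<^sup>+x. (\<integral>\<^sup>+y. indicator (UNIV \<times> A) (x, y) \<partial>Q x) \<partial>m0)"
    proof (rule nn_integral_cong)
      fix x
      have "(\<integral>\<^sup>+y. indicator (UNIV \<times> A) (x, y) \<partial>Q x) = (\<integral>\<^sup>+y. indicator A y \<partial>Q x)"
        by (rule nn_integral_cong) (simp add: indicator_def)
      also have "\<dots> = emeasure (Q x) A" using A Q_sets by simp
      finally show "emeasure (Q x) A = (\<integral>\<^sup>+y. indicator (UNIV \<times> A) (x, y) \<partial>Q x)" by simp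
    qed
    also have "\<dots> = (\<integral>\<^sup>+y. (\<integral>\<^sup>+x. indicator (UNIV \<times> A) (x, y) \<partial>Q y) \<partial>m0)"
      using A by (intro Q_sym) auto
    also have "\<dots> = (\<integral>\<^sup>+y. indicator A y \<partial>m0)"
    proof (rule nn_integral_cong)
      fix y
      have "(\<integral>\<^sup>+x. indicator (UNIV \<times> A) (x, y) \<partial>Q y) = (\<integral>\<^sup>+x. indicator A y \<partial>Q y)"
        by (rule nn_integral_cong) (simp add: indicator_def)
      also have "\<dots> = indicator A y * emeasure (Q y) (space (Q y))" by simp
      also have "\<dots> = indicator A y" using prob_space.emeasure_space_1[OF Q_prob] by simp
      finally show "(\<integral>\<^sup>+x. indicator (UNIV \<times> A) (x, y) \<partial>Q y) = indicator A y" .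
    qed
    also have "\<dots> = emeasure m0 A" using A m0_sets by simp
    finally show "emeasure (m0 \<bind> Q) A = emeasure m0 A" .
  qed
  have "(\<integral>\<^sup>+x. \<integral>\<^sup>+y. h y \<partial>Q x \<partial>m0) = (\<integral>\<^sup>+y. h y \<partial>(m0 \<bind> Q))"
    using nn_integral_bind[OF h Qm'] by simp
  then show ?thesis using eq by simp
qed

lemma ennreal_integral_le_nn:
  fixes f :: "'b \<Rightarrow> real"
  assumes "f \<in> borel_measurable N" "\<And>x. 0 \<le> f x"
  shows "ennreal (integral\<^sup>L N f) \<le> (\<integral>\<^sup>+x. ennreal (f x) \<partial>N)"
proof (cases "integrable N f")
  case True
  then show ?thesis using assms by (subst nn_integral_eq_integral) auto
next
  case False
  then show ?thesis by (simp add: not_integrable_integral_eq)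
qed

lemma jump_bound:
  fixes Q :: "'a::topological_space \<Rightarrow> 'a measure" and m0 :: "'a measure" and w :: "'a \<Rightarrow> real"
  assumes Q_prob: "\<And>x. prob_space (Q x)"
    and Q_sets: "\<And>x. sets (Q x) = sets borel"
    and Q_meas: "\<And>A. A \<in> sets borel \<Longrightarrow> (\<lambda>x. emeasure (Q x) A) \<in> borel_measurable borel"
    and m0_sets: "sets m0 = sets borel"
    and Q_sym: "\<And>C. C \<in> sets (borel \<Otimes>\<^sub>M borel) \<Longrightarrow>
        (\<integral>\<^sup>+x. (\<integral>\<^sup>+y. indicator C (x, y) \<partial>Q x) \<partial>m0)
      = (\<integral>\<^sup>+y. (\<integral>\<^sup>+x. indicator C (x, y) \<partial>Q y) \<partial>m0)"
    and lam_meas: "lam \<in> borel_measurable borel"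
    and lam_pos: "\<And>x. lam x > 0"
    and lam_le: "\<And>x. lam x \<le> B"
    and w: "w \<in> L2 (density m0 (\<lambda>x. ennreal (1 / lam x)))"
  shows "jump_form (density m0 (\<lambda>x. ennreal (1 / lam x))) Q lam w w
          \<le> 2 * B * (\<integral>x. (w x)\<^sup>2 \<partial>density m0 (\<lambda>x. ennreal (1 / lam x)))"
proof -
  define M where "M = density m0 (\<lambda>x. ennreal (1 / lam x))"
  define S where "S = (\<integral>x. (w x)\<^sup>2 \<partial>M)"
  have B0: "0 \<le> B" using lam_le[of undefined] lam_pos[of undefined] by simp
  have M_sets: "sets M = sets borel" unfolding M_def using m0_sets by simp
  have wM: "w \<in> borel_measurable M" and intw: "integrable M (\<lambda>x. (w x)\<^sup>2)"
    using w unfolding L2_def M_def by auto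
  have wb[measurable]: "w \<in> borel_measurable borel"
    using wM measurable_cong_sets[OF M_sets refl] by blast
  have lm0[measurable]: "lam \<in> borel_measurable m0"
    using lam_meas measurable_cong_sets[OF m0_sets refl] by blast
  have wm0[measurable]: "w \<in> borel_measurable m0"
    using wb measurable_cong_sets[OF m0_sets refl] by blast
  have S0: "0 \<le> S" unfolding S_def by simp
  have Qm: "Q \<in> measurable borel (subprob_algebra borel)"
    by (rule measurable_subprob_algebra) (auto simp: prob_space_imp_subprob_space Q_prob Q_sets Q_meas)
  have Qm': "Q \<in> measurable m0 (subprob_algebra borel)"
    using Qm measurable_cong_sets[OF m0_sets refl] by blast
  define K where "K x = (\<integral>\<^sup>+y. ennreal ((w y)\<^sup>2) \<partial>Q x)" for x
  have Km[measurable]: "K \<in> borel_measurable m0"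
    unfolding K_def
    by (rule measurable_compose[OF Qm' nn_integral_measurable_subprob_algebra]) measurable
  have sp1: "\<And>x. measure (Q x) (space (Q x)) = 1"
    using Q_prob prob_space.prob_space by blast
  have t2: "(\<integral>x. w x * w x * (1 - measure (Q x) (space (Q x))) * lam x \<partial>M) = 0"
    by (simp add: sp1)
  define g where "g x = (\<integral>y. (w x - w y) * (w x - w y) \<partial>Q x)" for x
  have gle: "ennreal (g x) \<le> 2 * ennreal ((w x)\<^sup>2) + 2 * K x" for x
  proof -
    have wQ[measurable]: "w \<in> borel_measurable (Q x)"
      using wb measurable_cong_sets[OF Q_sets refl] by blast
    have "ennreal (g x) \<le> (\<integral>\<^sup>+y. ennreal ((w x - w y) * (w x - w y)) \<partial>Q x)"
      unfolding g_def by (rule ennreal_integral_le_nn) auto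
    also have "\<dots> \<le> (\<integral>\<^sup>+y. ennreal (2 * (w x)\<^sup>2) + 2 * ennreal ((w y)\<^sup>2) \<partial>Q x)"
    proof (rule nn_integral_mono)
      fix y
      have "(w x - w y) * (w x - w y) \<le> 2 * (w x)\<^sup>2 + 2 * (w y)\<^sup>2"
        using zero_le_power2[of "w x + w y"] by (simp add: power2_eq_square algebra_simps)
      then have "ennreal ((w x - w y) * (w x - w y)) \<le> ennreal (2 * (w x)\<^sup>2 + 2 * (w y)\<^sup>2)"
        by (rule ennreal_leI)
      also have "\<dots> = ennreal (2 * (w x)\<^sup>2) + 2 * ennreal ((w y)\<^sup>2)"
        by (simp add: ennreal_plus[symmetric] ennreal_mult'')
      finally show "ennreal ((w x - w y) * (w x - w y)) \<le> ennreal (2 * (w x)\<^sup>2) + 2 * ennreal ((w y)\<^sup>2)" .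
    qed
    also have "\<dots> = (\<integral>\<^sup>+y. ennreal (2 * (w x)\<^sup>2) \<partial>Q x) + (\<integral>\<^sup>+y. 2 * ennreal ((w y)\<^sup>2) \<partial>Q x)"
      by (rule nn_integral_add) auto
    also have "\<dots> = ennreal (2 * (w x)\<^sup>2) + 2 * K x"
      unfolding K_def using prob_space.emeasure_space_1[OF Q_prob]
      by (simp add: nn_integral_cmult)
    also have "\<dots> = 2 * ennreal ((w x)\<^sup>2) + 2 * K x"
      by (simp add: ennreal_mult'')
    finally show ?thesis .
  qed
  have "(\<integral>\<^sup>+x. ennreal (g x * lam x) \<partial>M)
      \<le> (\<integral>\<^sup>+x. (2 * ennreal ((w x)\<^sup>2) + 2 * K x) * ennreal (lam x) \<partial>M)"
  proof (rule nn_integral_mono)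
    fix x
    have "0 \<le> g x" unfolding g_def by simp
    then have "ennreal (g x * lam x) = ennreal (g x) * ennreal (lam x)"
      using lam_pos[of x] by (simp add: ennreal_mult)
    also have "\<dots> \<le> (2 * ennreal ((w x)\<^sup>2) + 2 * K x) * ennreal (lam x)"
      by (intro mult_right_mono gle) auto
    finally show "ennreal (g x * lam x) \<le> (2 * ennreal ((w x)\<^sup>2) + 2 * K x) * ennreal (lam x)" .
  qed
  also have "\<dots> = (\<integral>\<^sup>+x. ennreal (1 / lam x) * ((2 * ennreal ((w x)\<^sup>2) + 2 * K x) * ennreal (lam x)) \<partial>m0)"
    unfolding M_def by (rule nn_integral_density) measurable
  also have "\<dots> = (\<integral>\<^sup>+x. 2 * ennreal ((w x)\<^sup>2) + 2 * K x \<partial>m0)"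
  proof (rule nn_integral_cong)
    fix x
    have "ennreal (1 / lam x) * ennreal (lam x) = 1"
      using lam_pos[of x] by (simp add: ennreal_mult[symmetric])
    then show "ennreal (1 / lam x) * ((2 * ennreal ((w x)\<^sup>2) + 2 * K x) * ennreal (lam x))
        = 2 * ennreal ((w x)\<^sup>2) + 2 * K x"
      by (metis (no_types, lifting) mult.commute mult.left_commute mult_1)
  qed
  also have "\<dots> = 2 * (\<integral>\<^sup>+x. ennreal ((w x)\<^sup>2) \<partial>m0) + 2 * (\<integral>\<^sup>+x. K x \<partial>m0)"
    by (simp add: nn_integral_add nn_integral_cmult)
  also have "(\<integral>\<^sup>+x. K x \<partial>m0) = (\<integral>\<^sup>+x. ennreal ((w x)\<^sup>2) \<partial>m0)"
  proof -
    have hm: "(\<lambda>y. ennreal ((w y)\<^sup>2)) \<in> borel_measurable borel" by measurable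
    show ?thesis using kernel_inv[OF Q_prob Q_sets Q_meas m0_sets Q_sym hm] unfolding K_def .
  qed
  also have "2 * (\<integral>\<^sup>+x. ennreal ((w x)\<^sup>2) \<partial>m0) + 2 * (\<integral>\<^sup>+x. ennreal ((w x)\<^sup>2) \<partial>m0)
      = 4 * (\<integral>\<^sup>+x. ennreal ((w x)\<^sup>2) \<partial>m0)"
    by (metis (no_types, lifting) distrib_right numeral_Bit0 numeral_One one_add_one)
  also have "(\<integral>\<^sup>+x. ennreal ((w x)\<^sup>2) \<partial>m0) \<le> (\<integral>\<^sup>+x. ennreal B * (ennreal (1 / lam x) * ennreal ((w x)\<^sup>2)) \<partial>m0)"
  proof (rule nn_integral_mono)
    fix x
    have l: "0 < lam x" by (rule lam_pos)
    have "(w x)\<^sup>2 = lam x * (1 / lam x * (w x)\<^sup>2)" using l by simp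
    also have "\<dots> \<le> B * (1 / lam x * (w x)\<^sup>2)"
      by (rule mult_right_mono[OF lam_le]) (use l in simp)
    finally have "ennreal ((w x)\<^sup>2) \<le> ennreal (B * (1 / lam x * (w x)\<^sup>2))" by (rule ennreal_leI)
    also have "\<dots> = ennreal B * (ennreal (1 / lam x) * ennreal ((w x)\<^sup>2))"
      using l B0 by (simp only: ennreal_mult[symmetric] zero_le_power2 divide_nonneg_nonneg mult_nonneg_nonneg less_imp_le zero_le_one)
    finally show "ennreal ((w x)\<^sup>2) \<le> ennreal B * (ennreal (1 / lam x) * ennreal ((w x)\<^sup>2))" .
  qed
  also have "(\<integral>\<^sup>+x. ennreal B * (ennreal (1 / lam x) * ennreal ((w x)\<^sup>2)) \<partial>m0)
      = ennreal B * (\<integral>\<^sup>+x. ennreal ((w x)\<^sup>2) \<partial>M)"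
    unfolding M_def by (simp add: nn_integral_cmult nn_integral_density)
  also have "(\<integral>\<^sup>+x. ennreal ((w x)\<^sup>2) \<partial>M) = ennreal S"
    unfolding S_def using intw by (subst nn_integral_eq_integral) auto
  finally have le0: "(\<integral>\<^sup>+x. ennreal (g x * lam x) \<partial>M) \<le> 4 * (ennreal B * ennreal S)"
    by (simp add: mult_left_mono)
  have "4 * (ennreal B * ennreal S) = ennreal (4 * B * S)"
    using B0 S0 by (simp add: ennreal_mult ennreal_mult'' mult.assoc)
  with le0 have le: "(\<integral>\<^sup>+x. ennreal (g x * lam x) \<partial>M) \<le> ennreal (4 * B * S)" by simp
  have I: "(\<integral>x. g x * lam x \<partial>M) \<le> 4 * B * S"
    by (rule integral_real_bounded) (use B0 S0 le in auto)
  have "jump_form M Q lam w w = (1/2) * (\<integral>x. g x * lam x \<partial>M)"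
    unfolding jump_form_def g_def t2 by simp
  also have "\<dots> \<le> 2 * B * S" using I by simp
  finally show ?thesis unfolding M_def S_def .
qed


lemma L2_diff_int:
  assumes "a \<in> L2 M" "b \<in> L2 M"
  shows "integrable M (\<lambda>x. (a x - b x)\<^sup>2)"
proof (rule Bochner_Integration.integrable_bound)
  show "integrable M (\<lambda>x. 2 * (a x)\<^sup>2 + 2 * (b x)\<^sup>2)" using assms unfolding L2_def by auto
  show "(\<lambda>x. (a x - b x)\<^sup>2) \<in> borel_measurable M" using assms unfolding L2_def by auto
  show "AE x in M. norm ((a x - b x)\<^sup>2) \<le> norm (2 * (a x)\<^sup>2 + 2 * (b x)\<^sup>2)"
  proof (rule AE_I2)
    fix x
    have "(a x - b x)\<^sup>2 \<le> 2 * (a x)\<^sup>2 + 2 * (b x)\<^sup>2"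
      using zero_le_power2[of "a x + b x"] by (simp add: power2_eq_square algebra_simps)
    then show "norm ((a x - b x)\<^sup>2) \<le> norm (2 * (a x)\<^sup>2 + 2 * (b x)\<^sup>2)" by simp
  qed
qed

lemma L2_tri:
  assumes "a \<in> L2 M" "b \<in> L2 M" "c \<in> L2 M"
  shows "(\<integral>x. (a x - c x)\<^sup>2 \<partial>M) \<le> 2 * (\<integral>x. (b x - a x)\<^sup>2 \<partial>M) + 2 * (\<integral>x. (b x - c x)\<^sup>2 \<partial>M)"
proof -
  have i1: "integrable M (\<lambda>x. (b x - a x)\<^sup>2)" and i2: "integrable M (\<lambda>x. (b x - c x)\<^sup>2)"
    and i3: "integrable M (\<lambda>x. (a x - c x)\<^sup>2)"
    using L2_diff_int assms by blast+
  have "(\<integral>x. (a x - c x)\<^sup>2 \<partial>M) \<le> (\<integral>x. 2 * (b x - a x)\<^sup>2 + 2 * (b x - c x)\<^sup>2 \<partial>M)"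
  proof (rule integral_mono)
    fix x
    show "(a x - c x)\<^sup>2 \<le> 2 * (b x - a x)\<^sup>2 + 2 * (b x - c x)\<^sup>2"
      using zero_le_power2[of "2 * b x - a x - c x"] by (simp add: power2_eq_square algebra_simps)
  qed (use i1 i2 i3 in auto)
  also have "\<dots> = 2 * (\<integral>x. (b x - a x)\<^sup>2 \<partial>M) + 2 * (\<integral>x. (b x - c x)\<^sup>2 \<partial>M)"
    using i1 i2 by simp
  finally show ?thesis .
qed

lemma L2_sym: fixes a b :: "'b \<Rightarrow> real" shows "(\<integral>x. (a x - b x)\<^sup>2 \<partial>M) = (\<integral>x. (b x - a x)\<^sup>2 \<partial>M)"
  by (rule Bochner_Integration.integral_cong) (simp_all add: power2_eq_square algebra_simps)

theorem proposition4p1: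
  fixes Q :: "'a::{metric_space, second_countable_topology} \<Rightarrow> 'a measure"
    and m0 :: "'a measure"
    and lam :: "'a \<Rightarrow> real"
    and \<E>' :: "('a \<Rightarrow> real) \<Rightarrow> ('a \<Rightarrow> real) \<Rightarrow> real"
    and F' :: "('a \<Rightarrow> real) set"
  assumes loc_compact: "locally compact (UNIV :: 'a set)"
    and Q_prob: "\<And>x. prob_space (Q x)"
    and Q_sets: "\<And>x. sets (Q x) = sets borel"
    and Q_meas: "\<And>A. A \<in> sets borel \<Longrightarrow> (\<lambda>x. emeasure (Q x) A) \<in> borel_measurable borel"
    and Q_diag: "\<And>x. emeasure (Q x) {x} = 0"
    and m0_sets: "sets m0 = sets borel"
    and m0_sigma: "sigma_finite_measure m0"
    and m0_support: "\<And>U. open U \<Longrightarrow> U \<noteq> {} \<Longrightarrow> emeasure m0 U > 0"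
    and Q_sym: "\<And>C. C \<in> sets (borel \<Otimes>\<^sub>M borel) \<Longrightarrow>
        (\<integral>\<^sup>+x. (\<integral>\<^sup>+y. indicator C (x, y) \<partial>Q x) \<partial>m0)
      = (\<integral>\<^sup>+y. (\<integral>\<^sup>+x. indicator C (x, y) \<partial>Q y) \<partial>m0)"
    and lam_meas: "lam \<in> borel_measurable borel"
    and lam_bdd: "bounded (range lam)"
    and lam_pos: "\<And>x. lam x > 0"
    and m_radon: "radon_measure (density m0 (\<lambda>x. ennreal (1 / lam x)))"
    and E_regular: "regular_dirichlet_form (density m0 (\<lambda>x. ennreal (1 / lam x)))
        (jump_form (density m0 (\<lambda>x. ennreal (1 / lam x))) Q lam)
        (L2 (density m0 (\<lambda>x. ennreal (1 / lam x))))"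
    and sub: "regular_dirichlet_subspace (density m0 (\<lambda>x. ennreal (1 / lam x)))
        (jump_form (density m0 (\<lambda>x. ennreal (1 / lam x))) Q lam)
        (L2 (density m0 (\<lambda>x. ennreal (1 / lam x)))) \<E>' F'"
  shows "F' = L2 (density m0 (\<lambda>x. ennreal (1 / lam x)))
    \<and> (\<forall>u\<in>F'. \<forall>v\<in>F'. \<E>' u v = jump_form (density m0 (\<lambda>x. ennreal (1 / lam x))) Q lam u v)"
proof -
  define M where "M = density m0 (\<lambda>x. ennreal (1 / lam x))"
  have df: "dirichlet_form M \<E>' F'" and sub2: "F' \<subseteq> L2 M"
    and EE: "\<forall>u\<in>F'. \<forall>v\<in>F'. \<E>' u v = jump_form M Q lam u v"
    using sub unfolding M_def regular_dirichlet_subspace_def regular_dirichlet_form_def by auto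
  note dfu = df[unfolded dirichlet_form_def]
  have sat: "\<And>u v. u \<in> F' \<Longrightarrow> v \<in> L2 M \<Longrightarrow> (AE x in M. u x = v x) \<Longrightarrow> v \<in> F'"
    using dfu[THEN conjunct2, THEN conjunct1] by blast
  have lin: "\<And>u v a b. u \<in> F' \<Longrightarrow> v \<in> F' \<Longrightarrow> (\<lambda>x. a * u x + b * v x) \<in> F'"
    using dfu[THEN conjunct2, THEN conjunct2, THEN conjunct2, THEN conjunct1] by blast
  have dense: "\<And>f \<epsilon>. f \<in> L2 M \<Longrightarrow> \<epsilon> > 0 \<Longrightarrow> \<exists>u\<in>F'. (\<integral>x. (f x - u x)\<^sup>2 \<partial>M) < \<epsilon>"
    using dfu[THEN conjunct2, THEN conjunct2, THEN conjunct2, THEN conjunct2, THEN conjunct1] by blast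
  have nonneg: "\<And>u. u \<in> F' \<Longrightarrow> \<E>' u u \<ge> 0"
    using dfu[THEN conjunct2, THEN conjunct2, THEN conjunct2, THEN conjunct2, THEN conjunct2, THEN conjunct2, THEN conjunct2, THEN conjunct1] by blast
  have closed: "\<And>u::nat \<Rightarrow> 'a \<Rightarrow> real. (\<forall>n. u n \<in> F') \<Longrightarrow>
        (\<forall>\<epsilon>>0. \<exists>N. \<forall>n\<ge>N. \<forall>k\<ge>N. E1 M \<E>' (\<lambda>x. u n x - u k x) < \<epsilon>) \<Longrightarrow>
        (\<exists>v\<in>F'. (\<lambda>n. E1 M \<E>' (\<lambda>x. u n x - v x)) \<longlonglongrightarrow> 0)"
    using dfu[THEN conjunct2, THEN conjunct2, THEN conjunct2, THEN conjunct2, THEN conjunct2, THEN conjunct2, THEN conjunct2, THEN conjunct2, THEN conjunct1] by blast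
  have diff: "(\<lambda>x. u x - v x) \<in> F'" if "u \<in> F'" "v \<in> F'" for u v
    using lin[OF that, of 1 "-1"] by simp
  obtain B0 where B0: "\<And>x. norm (lam x) \<le> B0" using lam_bdd by (auto simp: bounded_iff)
  define B where "B = max B0 0"
  have Bge: "B \<ge> 0" and lam_le: "\<And>x. lam x \<le> B"
    unfolding B_def using B0 by (auto simp: le_max_iff_disj) (metis abs_ge_self order_trans real_norm_def)
  have Ebd: "\<E>' d d \<le> 2 * B * (\<integral>x. (d x)\<^sup>2 \<partial>M)" if "d \<in> F'" for d
  proof -
    have "d \<in> L2 M" using that sub2 by blast
    then have "jump_form M Q lam d d \<le> 2 * B * (\<integral>x. (d x)\<^sup>2 \<partial>M)"
      unfolding M_def using jump_bound[OF Q_prob Q_sets Q_meas m0_sets Q_sym lam_meas lam_pos lam_le] by (metis M_def)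
    then show ?thesis using EE that by simp
  qed
  have "L2 M \<subseteq> F'"
  proof
    fix f assume f: "f \<in> L2 M"
    have "\<forall>n. \<exists>u\<in>F'. (\<integral>x. (f x - u x)\<^sup>2 \<partial>M) < 1 / real (Suc n)"
      using dense[OF f] by simp
    then obtain u where uF: "\<And>n. u n \<in> F'" and uc: "\<And>n. (\<integral>x. (f x - u n x)\<^sup>2 \<partial>M) < 1 / real (Suc n)"
      by metis
    have uL: "u n \<in> L2 M" for n using uF sub2 by blast
    have cauchy: "(\<integral>x. (u n x - u k x)\<^sup>2 \<partial>M) \<le> 2 / real (Suc n) + 2 / real (Suc k)" for n k
    proof -
      have "(\<integral>x. (u n x - u k x)\<^sup>2 \<partial>M) \<le> 2 * (\<integral>x. (f x - u n x)\<^sup>2 \<partial>M) + 2 * (\<integral>x. (f x - u k x)\<^sup>2 \<partial>M)"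
        by (rule L2_tri[OF uL f uL])
      also have "\<dots> \<le> 2 / real (Suc n) + 2 / real (Suc k)"
        using uc[of n] uc[of k] by simp
      finally show ?thesis .
    qed
    have "\<forall>\<epsilon>>0. \<exists>N. \<forall>n\<ge>N. \<forall>k\<ge>N. E1 M \<E>' (\<lambda>x. u n x - u k x) < \<epsilon>"
    proof (intro allI impI)
      fix \<epsilon> :: real assume e: "\<epsilon> > 0"
      obtain N where N: "4 * (2 * B + 1) / \<epsilon> < real N" using reals_Archimedean2 by blast
      have "\<forall>n\<ge>N. \<forall>k\<ge>N. E1 M \<E>' (\<lambda>x. u n x - u k x) < \<epsilon>"
      proof (intro allI impI)
        fix n k assume nk: "N \<le> n" "N \<le> k"
        let ?d = "\<lambda>x. u n x - u k x"
        have dF: "?d \<in> F'" using diff uF by blast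
        have "E1 M \<E>' ?d = \<E>' ?d ?d + (\<integral>x. (?d x)\<^sup>2 \<partial>M)" unfolding E1_def by simp
        also have "\<dots> \<le> (2 * B + 1) * (\<integral>x. (?d x)\<^sup>2 \<partial>M)" using Ebd[OF dF] by (simp add: algebra_simps)
        also have "\<dots> \<le> (2 * B + 1) * (2 / real (Suc n) + 2 / real (Suc k))"
          using cauchy[of n k] Bge by (intro mult_left_mono) auto
        also have "\<dots> \<le> (2 * B + 1) * (4 / real (Suc N))"
        proof (intro mult_left_mono)
          have "2 / real (Suc n) \<le> 2 / real (Suc N)" "2 / real (Suc k) \<le> 2 / real (Suc N)"
            using nk by (auto intro!: divide_left_mono)
          then show "2 / real (Suc n) + 2 / real (Suc k) \<le> 4 / real (Suc N)" by simp
        qed (use Bge in auto)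
        also have "\<dots> < \<epsilon>"
        proof -
          have "4 * (2 * B + 1) < \<epsilon> * real (Suc N)"
            using N e by (simp add: divide_less_eq algebra_simps)
          then show ?thesis by (simp add: divide_less_eq mult.commute)
        qed
        finally show "E1 M \<E>' ?d < \<epsilon>" .
      qed
      then show "\<exists>N. \<forall>n\<ge>N. \<forall>k\<ge>N. E1 M \<E>' (\<lambda>x. u n x - u k x) < \<epsilon>" by blast
    qed
    then obtain v where vF: "v \<in> F'" and lim: "(\<lambda>n. E1 M \<E>' (\<lambda>x. u n x - v x)) \<longlonglongrightarrow> 0"
      using closed uF by blast
    have vL: "v \<in> L2 M" using vF sub2 by blast
    have b1: "(\<integral>x. (u n x - v x)\<^sup>2 \<partial>M) \<le> E1 M \<E>' (\<lambda>x. u n x - v x)" for n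
      using nonneg[OF diff[OF uF vF]] unfolding E1_def by simp
    have l1: "(\<lambda>n. (\<integral>x. (u n x - v x)\<^sup>2 \<partial>M)) \<longlonglongrightarrow> 0"
      by (rule tendsto_sandwich[OF _ _ tendsto_const lim]) (auto intro!: always_eventually b1)
    have l2: "(\<lambda>n. (\<integral>x. (u n x - f x)\<^sup>2 \<partial>M)) \<longlonglongrightarrow> 0"
    proof (rule tendsto_sandwich[OF _ _ tendsto_const])
      show "(\<lambda>n. 1 / real (Suc n)) \<longlonglongrightarrow> 0" by (rule LIMSEQ_Suc[OF lim_const_over_n])
      show "\<forall>\<^sub>F n in sequentially. (\<integral>x. (u n x - f x)\<^sup>2 \<partial>M) \<le> 1 / real (Suc n)"
      proof (intro always_eventually allI)
        fix n
        have "(\<integral>x. (u n x - f x)\<^sup>2 \<partial>M) = (\<integral>x. (f x - u n x)\<^sup>2 \<partial>M)" by (rule L2_sym)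
        then show "(\<integral>x. (u n x - f x)\<^sup>2 \<partial>M) \<le> 1 / real (Suc n)" using uc[of n] by simp
      qed
    qed simp
    have l3: "(\<lambda>n. 2 * (\<integral>x. (u n x - f x)\<^sup>2 \<partial>M) + 2 * (\<integral>x. (u n x - v x)\<^sup>2 \<partial>M)) \<longlonglongrightarrow> 0"
      using tendsto_add[OF tendsto_mult_right[OF l2, of 2] tendsto_mult_right[OF l1, of 2]]
      by (simp add: mult.commute)
    have "(\<integral>x. (f x - v x)\<^sup>2 \<partial>M) \<le> 0"
      using LIMSEQ_le_const[OF l3] L2_tri[OF f uL vL] by blast
    then have z: "(\<integral>x. (f x - v x)\<^sup>2 \<partial>M) = 0"
      by (simp add: antisym)
    have "AE x in M. (f x - v x)\<^sup>2 = 0"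
      using z integral_nonneg_eq_0_iff_AE[OF L2_diff_int[OF f vL]] by simp
    then have "AE x in M. v x = f x" by (auto elim: AE_mp)
    then show "f \<in> F'" using sat[OF vF f] by blast
  qed
  then show ?thesis using sub2 EE unfolding M_def by blast
qed

end
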